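(* Let $r,q\in\mathbb N$ and let $M=(a_{ik})_{i,k=0}^\infty$ be an infinite complex matrix with $a_{ik}=0$ whenever $k>i+r$ or $i>k+q$, $a_{i,i+r}=1$ and $a_{i+q,i}\neq 0$ for all $i\ge 0$. For $k\ge 0$, $m=1,\dots,r$, $n=1,\dots,q$ put $S^{m,n}_k=(M^k)_{m-1,n-1}$ (entries of the $k$-th matrix power; $M^0$ is the identity). Define the infinite matrix $(\alpha_{i,j})_{i,j\ge 0}$ by $\alpha_{i,j}=S^{m_1,n_1}_{k_1+k_2}$ with $k_1=\lfloor i/r\rfloor$, $k_2=\lfloor j/q\rfloor$, $m_1=\operatorname{rem}(i,r)+1$, $n_1=\operatorname{rem}(j,q)+1$, and let $\Delta_k=\det(\alpha_{i,j})_{i,j=0}^{k}$ for $k\ge 0$, $\Delta_{-1}=1$. Then $\Delta_0=\Delta_1=\dots=\Delta_{q-1}=1$ and, for every $i\ge 0$, $$\Delta_{i+q}=\prod_{j=0}^{i} a_{j+q,\,j}^{\;\lfloor (i-j)/q\rfloor+1},$$ i.e. $\Delta_{i+q}=(a_{i+q,i}\cdots a_{i+1,i-q+1})(a_{i,i-q}\cdots a_{i-q+1,i-2q+1})^2\cdots(\cdots a_{q,0})^{h}$ with $h=\lfloor (i+q)/q\rfloor$, where factors $a_{j+q,j}$ with $j<0$ are interpreted as $1$.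
   Context: $\operatorname{rem}(a,b)$ denotes the remainder of $a$ upon division by $b$. The product formula is an equivalent rewriting of the paper's grouped formula: the $q$ consecutive factors $a_{j+q,j}$ with $j=i,\dots,i-q+1$ appear to power 1, the next $q$ to power 2, etc., up to $a_{q,0}$ appearing to power $h$. *)

theory Defs
  imports Complex_Main "Jordan_Normal_Form.Determinant"
begin

text \<open>Infinite matrices indexed by nat x nat. The product of infinite matrices is
the usual sum over the (finite, for banded matrices) set of indices where the summand
is nonzero.\<close>

definition inf_mat_mult :: "(nat \<Rightarrow> nat \<Rightarrow> complex) \<Rightarrow> (nat \<Rightarrow> nat \<Rightarrow> complex) \<Rightarrow> nat \<Rightarrow> nat \<Rightarrow> complex" where
  "inf_mat_mult A B i j = (\<Sum>l | A i l * B l j \<noteq> 0. A i l * B l j)"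

fun inf_mat_pow :: "(nat \<Rightarrow> nat \<Rightarrow> complex) \<Rightarrow> nat \<Rightarrow> nat \<Rightarrow> nat \<Rightarrow> complex" where
  "inf_mat_pow M 0 = (\<lambda>i j. if i = j then 1 else 0)"
| "inf_mat_pow M (Suc k) = inf_mat_mult (inf_mat_pow M k) M"

definition S_entry :: "(nat \<Rightarrow> nat \<Rightarrow> complex) \<Rightarrow> nat \<Rightarrow> nat \<Rightarrow> nat \<Rightarrow> complex" where
  "S_entry M m n k = inf_mat_pow M k (m - 1) (n - 1)"

definition alpha :: "(nat \<Rightarrow> nat \<Rightarrow> complex) \<Rightarrow> nat \<Rightarrow> nat \<Rightarrow> nat \<Rightarrow> nat \<Rightarrow> complex" where
  "alpha M r q i j = S_entry M (i mod r + 1) (j mod q + 1) (i div r + j div q)"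

definition Delta :: "(nat \<Rightarrow> nat \<Rightarrow> complex) \<Rightarrow> nat \<Rightarrow> nat \<Rightarrow> nat \<Rightarrow> complex" where
  "Delta M r q k = det (mat (k + 1) (k + 1) (\<lambda>(i, j). alpha M r q i j))"

end

theory Submission
  imports Defs
begin

lemma imm_eq:
  assumes "finite F" "\<And>l. l \<notin> F \<Longrightarrow> A i l * B l j = 0"
  shows "inf_mat_mult A B i j = (\<Sum>l\<in>F. A i l * B l j)"
  unfolding inf_mat_mult_def
  by (rule sum.mono_neutral_left) (use assms in auto)

locale bnd =
  fixes M :: "nat \<Rightarrow> nat \<Rightarrow> complex" and r q :: nat
  assumes r1: "r \<ge> 1" and q1: "q \<ge> 1"
    and up: "\<And>i k. k > i + r \<Longrightarrow> M i k = 0"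
    and lo: "\<And>i k. i > k + q \<Longrightarrow> M i k = 0"
    and sd: "\<And>i. M i (i + r) = 1"
    and nz: "\<And>i. M (i + q) i \<noteq> 0"
begin

abbreviation P where "P \<equiv> inf_mat_pow M"

lemma row0: "j > i + k*r \<Longrightarrow> P k i j = 0"
proof (induction k arbitrary: j)
  case 0 thus ?case by simp
next
  case (Suc k)
  have "P (Suc k) i j = inf_mat_mult (P k) M i j" by simp
  also have "\<dots> = (\<Sum>l\<in>{..i+k*r}. P k i l * M l j)"
    by (rule imm_eq) (auto simp: Suc.IH)
  also have "\<dots> = 0"
  proof (intro sum.neutral ballI)
    fix l assume "l \<in> {..i+k*r}"
    hence "j > l + r" using Suc.prems by auto
    thus "P k i l * M l j = 0" using up by simp
  qed
  finally show ?case .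
qed

lemma Psuc: "N > i + k*r \<Longrightarrow> P (Suc k) i j = (\<Sum>l<N. P k i l * M l j)"
  by simp (rule imm_eq, auto simp: row0)

declare inf_mat_pow.simps(2)[simp del]

lemma col0: "i > j + k*q \<Longrightarrow> P k i j = 0"
proof (induction k arbitrary: i j)
  case 0 thus ?case by simp
next
  case (Suc k)
  have "P (Suc k) i j = (\<Sum>l<Suc (i+k*r). P k i l * M l j)" by (rule Psuc) simp
  also have "\<dots> = 0"
  proof (intro sum.neutral ballI)
    fix l assume "l \<in> {..<Suc (i+k*r)}"
    show "P k i l * M l j = 0"
    proof (cases "l > j + q")
      case True thus ?thesis using lo by simp
    next
      case False
      hence "i > l + k*q" using Suc.prems by auto
      thus ?thesis using Suc.IH by simp
    qed
  qed
  finally show ?case .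
qed

lemma assoc: "N > m + a*r \<Longrightarrow> P (a+b) m n = (\<Sum>l<N. P a m l * P b l n)"
proof (induction b arbitrary: n)
  case 0
  have "(\<Sum>l<N. P a m l * P 0 l n) = (\<Sum>l<N. if l = n then P a m l else 0)"
    by (rule sum.cong) auto
  also have "\<dots> = (if n < N then P a m n else 0)" by (simp add: sum.delta)
  also have "\<dots> = P a m n" using 0 row0[of m a n] by auto
  finally show ?case by simp
next
  case (Suc b)
  have "P (a + Suc b) m n = P (Suc (a+b)) m n" by simp
  also have "\<dots> = (\<Sum>p<N + b*r. P (a+b) m p * M p n)"
    by (rule Psuc) (use Suc.prems in \<open>auto simp: algebra_simps\<close>)
  also have "\<dots> = (\<Sum>p<N + b*r. (\<Sum>l<N. P a m l * P b l p) * M p n)"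
    using Suc.IH[OF Suc.prems] by simp
  also have "\<dots> = (\<Sum>l<N. P a m l * (\<Sum>p<N + b*r. P b l p * M p n))"
    by (simp add: sum_distrib_left sum_distrib_right mult.assoc sum.swap[of _ "{..<N}"])
  also have "\<dots> = (\<Sum>l<N. P a m l * P (Suc b) l n)"
  proof (rule sum.cong)
    fix l assume "l \<in> {..<N}"
    hence "N + b*r > l + b*r" by auto
    thus "P a m l * (\<Sum>p<N + b*r. P b l p * M p n) = P a m l * P (Suc b) l n"
      using Psuc[of l b "N + b*r" n] by simp
  qed simp
  finally show ?case .
qed

lemma Pone: "P 1 i j = M i j"
proof -
  have "P (Suc 0) i j = (\<Sum>l<Suc i. P 0 i l * M l j)" by (rule Psuc) simp
  also have "\<dots> = (\<Sum>l<Suc i. if i = l then M l j else 0)" by (rule sum.cong) auto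
  also have "\<dots> = M i j" by (simp add: sum.delta)
  finally show ?thesis by simp
qed

lemma Pone': "P (Suc 0) i j = M i j" using Pone by simp

lemma diagU: "P k m (m + k*r) = 1"
proof (induction k)
  case 0 thus ?case by simp
next
  case (Suc k)
  have "P (Suc k) m (m + Suc k * r) = (\<Sum>l<Suc (m+k*r). P k m l * M l (m + Suc k * r))"
    by (rule Psuc) simp
  also have "\<dots> = (\<Sum>l<m+k*r. P k m l * M l (m + Suc k * r)) + P k m (m+k*r) * M (m+k*r) (m + Suc k * r)"
    by simp
  also have "(\<Sum>l<m+k*r. P k m l * M l (m + Suc k * r)) = 0"
  proof (intro sum.neutral ballI)
    fix l assume "l \<in> {..<m+k*r}"
    hence "m + Suc k * r > l + r" by auto
    thus "P k m l * M l (m + Suc k * r) = 0" using up by simp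
  qed
  also have "M (m+k*r) (m + Suc k * r) = 1" using sd[of "m+k*r"] by (simp add: algebra_simps)
  finally show ?case using Suc.IH by simp
qed

lemma diagV: "P (Suc k) (n + Suc k * q) n = M (n + Suc k*q) (n + k*q) * P k (n + k*q) n"
proof -
  let ?x = "n + Suc k * q"
  have "P (1 + k) ?x n = (\<Sum>l<Suc (?x + r). P 1 ?x l * P k l n)" by (rule assoc) simp
  also have "\<dots> = (\<Sum>l<Suc (?x + r). if l = n + k*q then M ?x (n+k*q) * P k (n+k*q) n else 0)"
  proof (rule sum.cong)
    fix l assume "l \<in> {..<Suc (?x + r)}"
    show "P 1 ?x l * P k l n = (if l = n + k*q then M ?x (n+k*q) * P k (n+k*q) n else 0)"
    proof (cases "l < n + k*q")
      case True
      hence "?x > l + q" by auto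
      thus ?thesis using lo[of l ?x] True by (simp add: Pone Pone')
    next
      case False
      show ?thesis
      proof (cases "l = n + k*q")
        case True thus ?thesis by (simp add: Pone Pone')
      next
        case F2: False
        hence "l > n + k*q" using False by auto
        thus ?thesis using col0[of n k l] F2 by simp
      qed
    qed
  qed simp
  also have "\<dots> = M ?x (n+k*q) * P k (n+k*q) n" by (simp add: sum.delta)
  finally show ?thesis by simp
qed

definition C where "C j = P (j div q) j (j mod q)"

lemma C_small: "j < q \<Longrightarrow> C j = 1"
  unfolding C_def by simp

lemma C_step: "C (j + q) = M (j + q) j * C j"
proof -
  define k n where "k = j div q" and "n = j mod q"
  have j: "j = n + k*q" unfolding k_def n_def by simp
  have e1: "(j + q) div q = Suc k" "(j+q) mod q = n" using q1 unfolding k_def n_def by auto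
  have e2: "j + q = n + Suc k * q" using j by simp
  have "C (j+q) = P (Suc k) (n + Suc k * q) n" unfolding C_def unfolding e1 unfolding e2 by (rule refl)
  also have "\<dots> = M (n + Suc k*q) (n + k*q) * P k (n + k*q) n" by (rule diagV)
  also have "P k (n + k*q) n = C j" unfolding C_def using j k_def n_def by simp
  finally show ?thesis using j by (simp add: algebra_simps)
qed

definition D where "D K = (\<Prod>j<K. C j)"

lemma D_small: "K \<le> q \<Longrightarrow> D K = 1"
  unfolding D_def by (rule prod.neutral) (auto simp: C_small)

lemma D_shift: "D (i + q + 1) = D (i+1) * (\<Prod>j=0..i. M (j+q) j)"
proof (induction i)
  case 0
  have "D (q+1) = D q * C (0 + q)" unfolding D_def by simp
  also have "\<dots> = M q 0" using D_small[of q] C_step[of 0] C_small[of 0] q1 by simp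
  finally show ?case unfolding D_def using C_small[of 0] q1 by simp
next
  case (Suc i)
  have "D (Suc i + q + 1) = D (i + q + 1) * C (Suc i + q)" unfolding D_def by simp
  also have "\<dots> = D (i+1) * (\<Prod>j=0..i. M (j+q) j) * (M (Suc i + q) (Suc i) * C (Suc i))"
    using Suc.IH C_step[of "Suc i"] by simp
  also have "\<dots> = D (Suc i + 1) * (\<Prod>j=0..Suc i. M (j+q) j)"
    unfolding D_def by (simp add: prod.atLeast0_atMost_Suc)
  finally show ?case .
qed

definition E where "E i = (\<Prod>j = 0..i. M (j + q) j ^ ((i - j) div q + 1))"

lemma D_E: "D (i + q + 1) = E i"
proof (induction i rule: less_induct)
  case (less i)
  show ?case
  proof (cases "i < q")
    case True
    have "D (i + q + 1) = (\<Prod>j=0..i. M (j+q) j)" using D_shift D_small[of "i+1"] True by simp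
    also have "\<dots> = E i" unfolding E_def
      by (rule prod.cong) (use True in auto)
    finally show ?thesis .
  next
    case False
    then obtain i' where i': "i = i' + q" by (metis add.commute le_add_diff_inverse not_less)
    have "i' < i" using i' q1 by simp
    have "E i' = (\<Prod>j=0..i. M (j+q) j ^ ((i - j) div q))"
      unfolding E_def
    proof (rule prod.mono_neutral_cong_left)
      show "\<forall>j\<in>{0..i} - {0..i'}. M (j+q) j ^ ((i - j) div q) = 1"
        using i' by auto
      show "\<And>j. j \<in> {0..i'} \<Longrightarrow> M (j + q) j ^ ((i' - j) div q + 1) = M (j+q) j ^ ((i - j) div q)"
      proof -
        fix j assume "j \<in> {0..i'}"
        hence "i - j = (i' - j) + q" using i' by auto
        thus "M (j + q) j ^ ((i' - j) div q + 1) = M (j+q) j ^ ((i - j) div q)" using q1 by simp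
      qed
    qed (use i' in auto)
    have "D (i + q + 1) = D (i' + q + 1) * (\<Prod>j=0..i. M (j+q) j)" using D_shift i' by simp
    also have "\<dots> = E i' * (\<Prod>j=0..i. M (j+q) j)" using less.IH[OF \<open>i' < i\<close>] by simp
    also have "\<dots> = (\<Prod>j=0..i. M (j+q) j ^ ((i - j) div q) * M (j+q) j)"
      unfolding \<open>E i' = _\<close> by (simp only: prod.distrib)
    also have "\<dots> = E i" unfolding E_def
      by (rule prod.cong) (auto simp: mult.commute)
    finally show ?thesis .
  qed
qed

lemma Delta_D: "Delta M r q k = D (Suc k)"
proof -
  let ?K = "Suc k"
  define U where "U = mat ?K ?K (\<lambda>(i,l). P (i div r) (i mod r) l)"
  define V where "V = mat ?K ?K (\<lambda>(l,j). P (j div q) l (j mod q))"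
  have U: "U \<in> carrier_mat ?K ?K" and V: "V \<in> carrier_mat ?K ?K" unfolding U_def V_def by auto
  have eq: "mat ?K ?K (\<lambda>(i, j). alpha M r q i j) = U * V"
  proof (rule eq_matI)
    fix i j assume i: "i < dim_row (U * V)" and j: "j < dim_col (U * V)"
    hence ik: "i < ?K" and jk: "j < ?K" using U V by auto
    have "(U * V) $$ (i,j) = (\<Sum>l\<in>{0..<?K}. P (i div r) (i mod r) l * P (j div q) l (j mod q))"
      using ik jk unfolding U_def V_def by (simp add: scalar_prod_def)
    also have "\<dots> = P (i div r + j div q) (i mod r) (j mod q)"
      unfolding atLeast0LessThan by (rule assoc[symmetric]) (use ik in simp)
    finally show "mat ?K ?K (\<lambda>(i, j). alpha M r q i j) $$ (i, j) = (U * V) $$ (i, j)"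
      using ik jk by (simp add: alpha_def S_entry_def)
  qed (use U V in auto)
  have dU: "det U = 1"
  proof -
    have "det U = prod_list (diag_mat U)"
    proof (rule det_lower_triangular[OF _ U])
      fix i j assume "i < j" "j < ?K"
      thus "U $$ (i,j) = 0" unfolding U_def
        using row0[of "i mod r" "i div r" j] by (simp add: mult.commute)
    qed
    also have "\<dots> = (\<Prod>i\<in>{0..<?K}. U $$ (i,i))" unfolding prod_list_diag_prod using U by simp
    also have "\<dots> = 1"
    proof (rule prod.neutral, rule ballI)
      fix i assume "i \<in> {0..<?K}"
      thus "U $$ (i,i) = 1" unfolding U_def
        using diagU[of "i div r" "i mod r"] by (simp add: mult.commute)
    qed
    finally show ?thesis .
  qed
  have dV: "det V = D ?K"
  proof -
    have "det V = prod_list (diag_mat V)"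
    proof (rule det_upper_triangular[OF _ V])
      show "upper_triangular V" unfolding upper_triangular_def
      proof (intro allI impI)
        fix i j assume "i < dim_row V" "j < i"
        thus "V $$ (i,j) = 0" unfolding V_def
          using col0[of "j mod q" "j div q" i] by (simp add: mult.commute)
      qed
    qed
    also have "\<dots> = (\<Prod>i\<in>{0..<?K}. V $$ (i,i))" unfolding prod_list_diag_prod using V by simp
    also have "\<dots> = D ?K" unfolding D_def C_def V_def atLeast0LessThan
      by (rule prod.cong) auto
    finally show ?thesis .
  qed
  have "Delta M r q k = det (mat ?K ?K (\<lambda>(i, j). alpha M r q i j))" by (simp add: Delta_def)
  also have "\<dots> = det U * det V" unfolding eq by (rule det_mult[OF U V])
  finally show ?thesis using dU dV by simp
qed

end

theorem lemma1:
  fixes M :: "nat \<Rightarrow> nat \<Rightarrow> complex" and r q :: nat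
  assumes "r \<ge> 1" and "q \<ge> 1"
    and "\<And>i k. k > i + r \<Longrightarrow> M i k = 0"
    and "\<And>i k. i > k + q \<Longrightarrow> M i k = 0"
    and "\<And>i. M i (i + r) = 1"
    and "\<And>i. M (i + q) i \<noteq> 0"
  shows "(\<forall>k < q. Delta M r q k = 1) \<and>
         (\<forall>i. Delta M r q (i + q) = (\<Prod>j = 0..i. M (j + q) j ^ ((i - j) div q + 1)))"
proof -
  interpret bnd M r q using assms by unfold_locales auto
  show ?thesis
    using Delta_D D_small D_E unfolding E_def
    by (metis Suc_eq_plus1 Suc_leI add_Suc)
qed

end
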